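(* Let $d\ge2$ and consider the linear system $\mathcal{S}_d$ in the unknowns $\alpha_{d,1},\ldots,\alpha_{d,d}$ consisting of the equations \begin{itemize} \item $\alpha_{d,d}=d-2$; \item for every $1\le k\le\lfloor d/2\rfloor$: $(d-k-1)\alpha_{d,k}+(k-1)\alpha_{d,d-k}+\alpha_{d,d}=2\big(k(d-k)-d+1\big)$; \item for every $1\le k\le\lfloor (d-1)/2\rfloor$: $(d-k-1)\alpha_{d,k}+2(d-k-2)\alpha_{d,k+1}+k\,\alpha_{d,d-k-1}+2(k-1)\alpha_{d,d-k}+2\alpha_{d,d}=2\big(3k(d-k-1)-2d+3\big)$. \end{itemize} Then, provided that $\alpha_{d,d-1}:=d-3$, the system $\mathcal{S}_d$ admits the unique solution $(\alpha_{d,1},\ldots,\alpha_{d,d})=(-1,0,1,\ldots,d-2)$, i.e. $\alpha_{d,j}=j-2$ for all $1\le j\le d$. *)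

theory Defs
  imports Complex_Main
begin

definition system_S :: "nat \<Rightarrow> (nat \<Rightarrow> real) \<Rightarrow> bool" where
  "system_S d \<alpha> \<longleftrightarrow>
     \<alpha> d = real d - 2 \<and>
     (\<forall>k\<in>{1..d div 2}.
        (real d - real k - 1) * \<alpha> k + (real k - 1) * \<alpha> (d - k) + \<alpha> d
          = 2 * (real k * (real d - real k) - real d + 1)) \<and>
     (\<forall>k\<in>{1..(d - 1) div 2}.
        (real d - real k - 1) * \<alpha> k + 2 * (real d - real k - 2) * \<alpha> (k + 1)
          + real k * \<alpha> (d - k - 1) + 2 * (real k - 1) * \<alpha> (d - k) + 2 * \<alpha> d
          = 2 * (3 * real k * (real d - real k - 1) - 2 * real d + 3))"

end

theory Submission
  imports Defs
begin

lemma step_alg: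
  fixes D K a b c e f :: real
  assumes "c = K - 2" "e = D - K - 2" "f = D - 2"
    and E1: "(D - (K+1) - 1) * a + ((K+1) - 1) * b + f = 2 * ((K+1) * (D - (K+1)) - D + 1)"
    and E2: "(D - K - 1) * c + 2 * (D - K - 2) * a + K * b + 2 * (K - 1) * e + 2 * f
              = 2 * (3 * K * (D - K - 1) - 2 * D + 3)"
    and nz: "D - K - 2 \<noteq> 0" "K \<noteq> 0"
  shows "a = K + 1 - 2 \<and> b = D - K - 1 - 2"
proof -
  have "(D - K - 2) * (a - (K - 1)) = 0"
    using E1 E2 assms(1-3) by (simp add: algebra_simps)
  then have ha: "a = K - 1" using nz by simp
  have "K * (b - (D - K - 3)) = 0"
    using E1 ha assms(3) by (simp add: algebra_simps)
  then have "b = D - K - 3" using nz by simp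
  with ha show ?thesis by simp
qed

lemma fwd:
  fixes d :: nat and \<alpha> :: "nat \<Rightarrow> real"
  assumes d2: "d \<ge> 2" and S: "system_S d \<alpha>" and dm1: "\<alpha> (d - 1) = real d - 3"
  shows "\<forall>j\<in>{1..d}. \<alpha> j = real j - 2"
proof -
  have ad: "\<alpha> d = real d - 2" using S unfolding system_S_def by blast
  have S1: "\<And>k. 1 \<le> k \<Longrightarrow> k \<le> d div 2 \<Longrightarrow>
        (real d - real k - 1) * \<alpha> k + (real k - 1) * \<alpha> (d - k) + \<alpha> d
          = 2 * (real k * (real d - real k) - real d + 1)"
    using S unfolding system_S_def by auto
  have S2: "\<And>k. 1 \<le> k \<Longrightarrow> k \<le> (d - 1) div 2 \<Longrightarrow>
        (real d - real k - 1) * \<alpha> k + 2 * (real d - real k - 2) * \<alpha> (k + 1)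
          + real k * \<alpha> (d - k - 1) + 2 * (real k - 1) * \<alpha> (d - k) + 2 * \<alpha> d
          = 2 * (3 * real k * (real d - real k - 1) - 2 * real d + 3)"
    using S unfolding system_S_def by auto
  have base: "\<alpha> 1 = real 1 - 2 \<and> \<alpha> (d - 1) = real (d - 1) - 2"
  proof (cases "d = 2")
    case True
    then show ?thesis using dm1 by simp
  next
    case False
    have "(real d - 1 - 1) * \<alpha> 1 + \<alpha> d = 2 * (real d - 1 - real d + 1)"
      using S1[of 1] d2 by simp
    then have "(real d - 2) * (\<alpha> 1 + 1) = 0" using ad by (simp add: algebra_simps)
    moreover have "real d - 2 \<noteq> 0" using False d2 by simp
    ultimately have "\<alpha> 1 = -1" by simp
    then show ?thesis using dm1 d2 by (simp add: of_nat_diff)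
  qed
  have IH: "\<And>k. 1 \<le> k \<Longrightarrow> k \<le> d div 2 \<Longrightarrow> \<alpha> k = real k - 2 \<and> \<alpha> (d - k) = real (d - k) - 2"
  proof -
    fix k assume "1 \<le> k" "k \<le> d div 2"
    then show "\<alpha> k = real k - 2 \<and> \<alpha> (d - k) = real (d - k) - 2"
    proof (induction k rule: nat_induct_at_least)
      case base
      then show ?case using \<open>\<alpha> 1 = real 1 - 2 \<and> \<alpha> (d - 1) = real (d - 1) - 2\<close> by simp
    next
      case (Suc k)
      then have ih: "\<alpha> k = real k - 2" "\<alpha> (d - k) = real (d - k) - 2" by auto
      have kd: "2 * k + 2 \<le> d" using Suc.prems by simp
      have rdk: "real (d - k) = real d - real k" using kd by (simp add: of_nat_diff)
      have e1: "(real d - real (Suc k) - 1) * \<alpha> (Suc k) + (real (Suc k) - 1) * \<alpha> (d - Suc k) + \<alpha> d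
          = 2 * (real (Suc k) * (real d - real (Suc k)) - real d + 1)"
        using S1[of "Suc k"] Suc.prems by simp
      have e2: "(real d - real k - 1) * \<alpha> k + 2 * (real d - real k - 2) * \<alpha> (k + 1)
          + real k * \<alpha> (d - k - 1) + 2 * (real k - 1) * \<alpha> (d - k) + 2 * \<alpha> d
          = 2 * (3 * real k * (real d - real k - 1) - 2 * real d + 3)"
        using S2[of k] Suc.hyps kd by simp
      have "\<alpha> (Suc k) = real k + 1 - 2 \<and> \<alpha> (d - Suc k) = real d - real k - 1 - 2"
        apply (rule step_alg[where D="real d" and K="real k" and c="\<alpha> k" and e="\<alpha> (d-k)" and f="\<alpha> d"])
        using ih rdk ad e1 e2 Suc.hyps kd by (auto simp: algebra_simps)
      moreover have "real (d - Suc k) = real d - real k - 1" using kd by (simp add: of_nat_diff)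
      ultimately show ?case by simp
    qed
  qed
  show ?thesis
  proof
    fix j assume j: "j \<in> {1..d}"
    show "\<alpha> j = real j - 2"
    proof (cases "j \<le> d div 2")
      case True then show ?thesis using IH[of j] j by auto
    next
      case False
      show ?thesis
      proof (cases "j = d")
        case True then show ?thesis using ad by simp
      next
        case False2: False
        have "1 \<le> d - j" "d - j \<le> d div 2" using False False2 j by auto
        then show ?thesis using IH[of "d - j"] j by auto
      qed
    qed
  qed
qed

lemma bwd:
  fixes d :: nat and \<alpha> :: "nat \<Rightarrow> real"
  assumes d2: "d \<ge> 2" and A: "\<forall>j\<in>{1..d}. \<alpha> j = real j - 2"
  shows "system_S d \<alpha> \<and> \<alpha> (d - 1) = real d - 3"
  unfolding system_S_def
proof (intro conjI ballI)
  show "\<alpha> d = real d - 2" using A d2 by simp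
  show "\<alpha> (d - 1) = real d - 3" using A d2 by (simp add: of_nat_diff)
next
  fix k assume k: "k \<in> {1..d div 2}"
  then have a1: "\<alpha> k = real k - 2" "\<alpha> (d - k) = real d - real k - 2" "\<alpha> d = real d - 2"
    using A by (auto simp: of_nat_diff)
  show "(real d - real k - 1) * \<alpha> k + (real k - 1) * \<alpha> (d - k) + \<alpha> d
          = 2 * (real k * (real d - real k) - real d + 1)"
    unfolding a1 by (simp add: algebra_simps)
next
  fix k assume k: "k \<in> {1..(d - 1) div 2}"
  then have a1: "\<alpha> k = real k - 2" "\<alpha> (d - k) = real d - real k - 2" "\<alpha> d = real d - 2"
     "\<alpha> (k + 1) = real k - 1" "\<alpha> (d - k - 1) = real d - real k - 3"
    using A by (auto simp: of_nat_diff)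
  show "(real d - real k - 1) * \<alpha> k + 2 * (real d - real k - 2) * \<alpha> (k + 1)
          + real k * \<alpha> (d - k - 1) + 2 * (real k - 1) * \<alpha> (d - k) + 2 * \<alpha> d
          = 2 * (3 * real k * (real d - real k - 1) - 2 * real d + 3)"
    unfolding a1 by (simp add: algebra_simps)
qed

theorem proposition4p15:
  fixes d :: nat
  assumes "d \<ge> 2"
  shows "\<forall>\<alpha> :: nat \<Rightarrow> real.
           (system_S d \<alpha> \<and> \<alpha> (d - 1) = real d - 3)
             \<longleftrightarrow> (\<forall>j\<in>{1..d}. \<alpha> j = real j - 2)"
  using fwd bwd assms by blast

end
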